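(* The law $\mathrm{x}\simeq(\mathrm{x}\diamond(\mathrm{x}\diamond\mathrm{y}))\diamond\mathrm{y}$ does not imply the law $\mathrm{x}\simeq(\mathrm{x}\diamond\mathrm{y})\diamond((\mathrm{x}\diamond\mathrm{y})\diamond\mathrm{y})$. Specifically, let $M=\langle a,b,c\mid a^2=b^2=c^2=1\rangle$ (the group of reduced words in $a,b,c$ with no two equal adjacent letters), define $f\colon M\to M$ by $f(1)=1$, $f(a)=b$, $f(b)=c$, $f(c)=a$, and $f(sw)=s$ for each letter $s\in\{a,b,c\}$ and each nonempty reduced word $w$ not starting with $s$; then the magma $(M,\diamond)$ with $x\diamond y=x\,f(x^{-1}y)$ satisfies the first law but not the second.
   Context: A magma satisfies a law if the identity holds for all assignments of variables; a law implies another if every magma satisfying the first satisfies the second. *)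

theory Defs
  imports Main
begin

datatype letter = A | B | C

definition reduced :: "letter list \<Rightarrow> bool" where
  "reduced w \<longleftrightarrow> (\<forall>i. Suc i < length w \<longrightarrow> w ! i \<noteq> w ! Suc i)"

definition Mset :: "letter list set" where
  "Mset = {w. reduced w}"

fun cons_red :: "letter \<Rightarrow> letter list \<Rightarrow> letter list" where
  "cons_red s [] = [s]"
| "cons_red s (t # w) = (if s = t then w else s # t # w)"

fun gmul :: "letter list \<Rightarrow> letter list \<Rightarrow> letter list" where
  "gmul [] v = v"
| "gmul (s # w) v = cons_red s (gmul w v)"

text \<open>Group inverse: every generator is an involution.\<close>
definition ginv :: "letter list \<Rightarrow> letter list" where
  "ginv w = rev w"

fun rot :: "letter \<Rightarrow> letter" where
  "rot A = B" | "rot B = C" | "rot C = A"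

fun fmap :: "letter list \<Rightarrow> letter list" where
  "fmap [] = []"
| "fmap [s] = [rot s]"
| "fmap (s # t # w) = [s]"

definition diamond :: "letter list \<Rightarrow> letter list \<Rightarrow> letter list" where
  "diamond x y = gmul x (fmap (gmul (ginv x) y))"

definition law1 :: "'a set \<Rightarrow> ('a \<Rightarrow> 'a \<Rightarrow> 'a) \<Rightarrow> bool" where
  "law1 S op \<longleftrightarrow> (\<forall>x\<in>S. \<forall>y\<in>S. x = op (op x (op x y)) y)"

definition law2 :: "'a set \<Rightarrow> ('a \<Rightarrow> 'a \<Rightarrow> 'a) \<Rightarrow> bool" where
  "law2 S op \<longleftrightarrow> (\<forall>x\<in>S. \<forall>y\<in>S. x = op (op x y) (op (op x y) y))"

end

theory Submission
  imports Defs
begin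

lemma red_iff: "reduced w \<longleftrightarrow> successively (\<noteq>) w"
  by (simp add: reduced_def successively_conv_nth)

lemma red_Nil[simp]: "reduced []" by (simp add: reduced_def)

lemma red_Cons: "reduced (s # w) \<longleftrightarrow> reduced w \<and> (w = [] \<or> hd w \<noteq> s)"
  by (cases w) (auto simp: red_iff)

lemma red_rev: "reduced (rev w) \<longleftrightarrow> reduced w"
  by (simp add: red_iff eq_commute)

lemma red_cons_red: "reduced w \<Longrightarrow> reduced (cons_red s w)"
  by (cases w) (auto simp: red_Cons)

lemma red_gmul: "reduced v \<Longrightarrow> reduced (gmul u v)"
  by (induction u) (auto simp: red_cons_red)

lemma red_fmap: "reduced (fmap w)"
  by (cases w rule: fmap.cases) (auto simp: red_Cons)

lemma cc: "reduced w \<Longrightarrow> cons_red s (cons_red s w) = w"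
  by (cases w rule: fmap.cases) (auto simp: red_Cons)

lemma gmul_cons_red: "reduced v \<Longrightarrow> gmul (cons_red s u) v = cons_red s (gmul u v)"
proof (cases u)
  case (Cons t u')
  assume v: "reduced v"
  show ?thesis
  proof (cases "s = t")
    case True
    then show ?thesis using Cons cc[OF red_gmul[OF v]] by simp
  qed (use Cons in simp)
qed simp

lemma assoc: "reduced v \<Longrightarrow> reduced w \<Longrightarrow> gmul (gmul u v) w = gmul u (gmul v w)"
  by (induction u) (auto simp: gmul_cons_red red_gmul)

lemma gmul_app: "gmul (a @ b) v = gmul a (gmul b v)"
  by (induction a) auto

lemma inv_l: "gmul (rev x) x = []"
  by (induction x) (auto simp: gmul_app)

lemma inv_r: "gmul x (rev x) = []"
  using inv_l[of "rev x"] by simp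

lemma right_unit2: "reduced v \<Longrightarrow> gmul v [] = v"
proof (induction v)
  case (Cons s w)
  then show ?case by (cases w) (auto simp: red_Cons)
qed simp

lemma uniq_inv: "reduced z \<Longrightarrow> reduced w \<Longrightarrow> gmul z w = [] \<Longrightarrow> w = rev z"
proof -
  assume z: "reduced z" and w: "reduced w" and e: "gmul z w = []"
  have "w = gmul (gmul (rev z) z) w" by (simp add: inv_l)
  also have "\<dots> = gmul (rev z) (gmul z w)" using z w by (simp add: assoc)
  also have "\<dots> = rev z" using e z by (simp add: right_unit2 red_rev)
  finally show ?thesis .
qed

lemma rev_gmul: "reduced a \<Longrightarrow> reduced b \<Longrightarrow> rev (gmul a b) = gmul (rev b) (rev a)"
proof -
  assume a: "reduced a" and b: "reduced b"
  have "gmul (gmul a b) (gmul (rev b) (rev a)) = gmul a (gmul b (gmul (rev b) (rev a)))"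
    using a b by (simp add: assoc red_gmul red_rev)
  also have "gmul b (gmul (rev b) (rev a)) = rev a"
    using a b by (simp add: assoc[symmetric] red_rev inv_r)
  finally have "gmul (gmul a b) (gmul (rev b) (rev a)) = []" by (simp add: inv_r)
  from uniq_inv[OF red_gmul[OF b] red_gmul[OF red_rev[THEN iffD2, OF a]] this]
  show ?thesis by simp
qed

lemma rot_ne: "rot s \<noteq> s" by (cases s) auto
lemma rot2_ne: "rot (rot s) \<noteq> s" by (cases s) auto

lemma key: "reduced u \<Longrightarrow>
  gmul (fmap (fmap u)) (fmap (gmul (rev (fmap (fmap u))) u)) = []"
proof (cases u rule: fmap.cases)
  case (2 s)
  then show ?thesis using rot2_ne[of s] by (simp add: rot2_ne)
next
  case (3 s t w)
  then show ?thesis using rot_ne[of s] by auto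
qed simp

theorem mainTheorem15:
  shows "(\<forall>x\<in>Mset. \<forall>y\<in>Mset. diamond x y \<in> Mset)
       \<and> law1 Mset diamond \<and> \<not> law2 Mset diamond"
proof (intro conjI)
  show "\<forall>x\<in>Mset. \<forall>y\<in>Mset. diamond x y \<in> Mset"
    by (simp add: Mset_def diamond_def red_gmul red_fmap)
  show "law1 Mset diamond"
    unfolding law1_def Mset_def
  proof (intro ballI)
    fix x y assume "x \<in> {w. reduced w}" "y \<in> {w. reduced w}"
    then have x: "reduced x" and y: "reduced y" by auto
    define u where "u = gmul (rev x) y"
    have u: "reduced u" unfolding u_def using y by (simp add: red_gmul)
    have yu: "y = gmul x u" unfolding u_def using x y
      by (simp add: assoc[symmetric] red_rev inv_r)
    have d1: "diamond x y = gmul x (fmap u)" by (simp add: diamond_def ginv_def u_def)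
    have d2: "diamond x (diamond x y) = gmul x (fmap (fmap u))"
      unfolding d1 diamond_def ginv_def u_def using x by (simp add: ginv_def assoc[symmetric] red_rev red_fmap inv_l)
    define G where "G = fmap (fmap u)"
    have rg: "rev (gmul x G) = gmul (rev G) (rev x)"
      using x by (simp add: rev_gmul G_def red_fmap)
    then have "gmul (rev (gmul x G)) y = gmul (rev G) u"
    proof -
      have "gmul (rev x) (gmul x u) = gmul (gmul (rev x) x) u"
        using x u by (simp add: assoc)
      then have "gmul (rev x) (gmul x u) = u" by (simp add: inv_l)
      moreover have "gmul (gmul (rev G) (rev x)) (gmul x u) = gmul (rev G) (gmul (rev x) (gmul x u))"
        using x u by (simp add: assoc red_rev red_gmul)
      ultimately show ?thesis by (simp add: rg yu[symmetric])
    qed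
    then have "diamond (diamond x (diamond x y)) y
        = gmul (gmul x G) (fmap (gmul (rev G) u))"
      unfolding d2 G_def[symmetric] by (simp only: diamond_def ginv_def)
    also have "\<dots> = gmul x (gmul G (fmap (gmul (rev G) u)))"
      by (simp add: assoc red_fmap G_def)
    also have "\<dots> = gmul x []" using key[OF u] by (simp add: G_def)
    also have "\<dots> = x" using x by (simp add: right_unit2)
    finally show "x = diamond (diamond x (diamond x y)) y" by simp
  qed
  show "\<not> law2 Mset diamond"
    unfolding law2_def Mset_def
  proof
    assume h: "\<forall>x\<in>{w. reduced w}. \<forall>y\<in>{w. reduced w}. x = diamond (diamond x y) (diamond (diamond x y) y)"
    have "reduced [A]" by (simp add: red_Cons)
    with h have "([]::letter list) = diamond (diamond [] [A]) (diamond (diamond [] [A]) [A])" by simp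
    then show False by (simp add: diamond_def ginv_def)
  qed
qed

end
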